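(* Let $S$ be a subspace of $\mathcal{A}\otimes\mathcal{B}$ (finite-dimensional). If there is a PPT-definite operator $\sigma$ with $\operatorname{supp}(\sigma)\subseteq S$, then $S$ is strongly PPT-unextendible.
   Context: A bipartite positive semidefinite operator $E\in\mathcal{L}(\mathcal{A}\otimes\mathcal{B})$ is PPT if its partial transpose $E^{T_B}$ (defined by $(|i\rangle\langle k|\otimes|j\rangle\langle l|)^{T_B}=|i\rangle\langle k|\otimes|l\rangle\langle j|$) is positive semidefinite, and PPT-definite if $E\ge 0$ and $E^{T_B}$ is positive definite. A subspace $S\subseteq\mathcal{A}\otimes\mathcal{B}$ is PPT-extendible if there exists a nonzero PPT operator whose support is contained in the orthogonal complement $S^\perp$; $S$ is strongly PPT-unextendible if for every positive integer $k$, $S^{\otimes k}\subseteq\mathcal{A}^{\otimes k}\otimes\mathcal{B}^{\otimes k}$ is not PPT-extendible (with respect to the bipartition $\mathcal{A}^{\otimes k}:\mathcal{B}^{\otimes k}$). *)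

theory Defs
  imports Complex_Main
begin

text \<open>Finite-dimensional Hilbert spaces are modelled concretely: a space with
orthonormal basis indexed by a finite set I consists of the functions
v :: 'i \<Rightarrow> complex vanishing outside I; operators are matrices
E :: 'i \<Rightarrow> 'i \<Rightarrow> complex, of which only the block I \<times> I matters.
The bipartite space A \<otimes> B has basis index set X \<times> Y.\<close>

definition vecs :: "'i set \<Rightarrow> ('i \<Rightarrow> complex) set" where
  "vecs I = {v. \<forall>i. i \<notin> I \<longrightarrow> v i = 0}"

definition cinner :: "'i set \<Rightarrow> ('i \<Rightarrow> complex) \<Rightarrow> ('i \<Rightarrow> complex) \<Rightarrow> complex" where
  "cinner I u v = (\<Sum>i\<in>I. cnj (u i) * v i)"

definition opapply :: "'i set \<Rightarrow> ('i \<Rightarrow> 'i \<Rightarrow> complex) \<Rightarrow> ('i \<Rightarrow> complex) \<Rightarrow> ('i \<Rightarrow> complex)" where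
  "opapply I E v = (\<lambda>i. if i \<in> I then (\<Sum>j\<in>I. E i j * v j) else 0)"

definition op_nonzero :: "'i set \<Rightarrow> ('i \<Rightarrow> 'i \<Rightarrow> complex) \<Rightarrow> bool" where
  "op_nonzero I E \<longleftrightarrow> (\<exists>i\<in>I. \<exists>j\<in>I. E i j \<noteq> 0)"

definition psd :: "'i set \<Rightarrow> ('i \<Rightarrow> 'i \<Rightarrow> complex) \<Rightarrow> bool" where
  "psd I E \<longleftrightarrow> (\<forall>i\<in>I. \<forall>j\<in>I. E i j = cnj (E j i)) \<and>
     (\<forall>v \<in> vecs I. Im (cinner I v (opapply I E v)) = 0 \<and> Re (cinner I v (opapply I E v)) \<ge> 0)"

definition pos_def :: "'i set \<Rightarrow> ('i \<Rightarrow> 'i \<Rightarrow> complex) \<Rightarrow> bool" where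
  "pos_def I E \<longleftrightarrow> psd I E \<and>
     (\<forall>v \<in> vecs I. v \<noteq> (\<lambda>_. 0) \<longrightarrow> Re (cinner I v (opapply I E v)) > 0)"

text \<open>Partial transpose on the second factor:
 (|i><k| \<otimes> |j><l|)^{T_B} = |i><k| \<otimes> |l><j|.\<close>
definition partial_transpose ::
  "(('a \<times> 'b) \<Rightarrow> ('a \<times> 'b) \<Rightarrow> complex) \<Rightarrow> (('a \<times> 'b) \<Rightarrow> ('a \<times> 'b) \<Rightarrow> complex)" where
  "partial_transpose E = (\<lambda>(x, y) (x', y'). E (x, y') (x', y))"

definition ppt :: "('a \<times> 'b) set \<Rightarrow> (('a \<times> 'b) \<Rightarrow> ('a \<times> 'b) \<Rightarrow> complex) \<Rightarrow> bool" where
  "ppt I E \<longleftrightarrow> psd I E \<and> psd I (partial_transpose E)"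

definition ppt_definite :: "('a \<times> 'b) set \<Rightarrow> (('a \<times> 'b) \<Rightarrow> ('a \<times> 'b) \<Rightarrow> complex) \<Rightarrow> bool" where
  "ppt_definite I E \<longleftrightarrow> psd I E \<and> pos_def I (partial_transpose E)"

text \<open>Support of a (positive semidefinite) operator = its range.\<close>
definition support :: "'i set \<Rightarrow> ('i \<Rightarrow> 'i \<Rightarrow> complex) \<Rightarrow> ('i \<Rightarrow> complex) set" where
  "support I E = {opapply I E v | v. v \<in> vecs I}"

definition orth_compl :: "'i set \<Rightarrow> ('i \<Rightarrow> complex) set \<Rightarrow> ('i \<Rightarrow> complex) set" where
  "orth_compl I S = {v \<in> vecs I. \<forall>s\<in>S. cinner I s v = 0}"

definition is_subspace :: "'i set \<Rightarrow> ('i \<Rightarrow> complex) set \<Rightarrow> bool" where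
  "is_subspace I S \<longleftrightarrow> S \<subseteq> vecs I \<and> (\<lambda>_. 0) \<in> S \<and>
     (\<forall>u\<in>S. \<forall>v\<in>S. (\<lambda>i. u i + v i) \<in> S) \<and> (\<forall>c. \<forall>v\<in>S. (\<lambda>i. c * v i) \<in> S)"

definition ppt_extendible :: "('a \<times> 'b) set \<Rightarrow> (('a \<times> 'b) \<Rightarrow> complex) set \<Rightarrow> bool" where
  "ppt_extendible I S \<longleftrightarrow>
     (\<exists>E. op_nonzero I E \<and> ppt I E \<and> support I E \<subseteq> orth_compl I S)"

text \<open>Basis of the k-fold tensor power: lists of length k.\<close>
definition lists_k :: "nat \<Rightarrow> 'a set \<Rightarrow> 'a list set" where
  "lists_k k X = {xs. length xs = k \<and> set xs \<subseteq> X}"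

text \<open>Product vector s_0 \<otimes> ... \<otimes> s_{k-1} in (A\<otimes>B)^{\<otimes>k}, regrouped as a
vector of A^{\<otimes>k} \<otimes> B^{\<otimes>k}.\<close>
definition prod_vec :: "nat \<Rightarrow> (nat \<Rightarrow> ('a \<times> 'b \<Rightarrow> complex)) \<Rightarrow> ('a list \<times> 'b list \<Rightarrow> complex)" where
  "prod_vec k s = (\<lambda>(xs, ys). if length xs = k \<and> length ys = k
       then (\<Prod>l<k. s l (xs ! l, ys ! l)) else 0)"

definition tensor_power_space :: "nat \<Rightarrow> ('a \<times> 'b \<Rightarrow> complex) set \<Rightarrow> ('a list \<times> 'b list \<Rightarrow> complex) set" where
  "tensor_power_space k S = {v. \<exists>(m::nat) (c::nat \<Rightarrow> complex) s. (\<forall>j<m. \<forall>l<k. s j l \<in> S) \<and>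
       v = (\<lambda>i. \<Sum>j<m. c j * prod_vec k (s j) i)}"

definition strongly_ppt_unextendible :: "'a set \<Rightarrow> 'b set \<Rightarrow> ('a \<times> 'b \<Rightarrow> complex) set \<Rightarrow> bool" where
  "strongly_ppt_unextendible X Y S \<longleftrightarrow>
     (\<forall>k::nat. k > 0 \<longrightarrow> \<not> ppt_extendible (lists_k k X \<times> lists_k k Y) (tensor_power_space k S))"

end

theory Submission
  imports Defs
begin


definition qf :: "'i set \<Rightarrow> ('i \<Rightarrow> 'i \<Rightarrow> complex) \<Rightarrow> ('i \<Rightarrow> complex) \<Rightarrow> complex" where
  "qf I A x = (\<Sum>i\<in>I. \<Sum>j\<in>I. cnj (x i) * A i j * x j)"

definition decomp :: "'i set \<Rightarrow> ('i \<Rightarrow> 'i \<Rightarrow> complex) \<Rightarrow> ('i \<Rightarrow> complex) list \<Rightarrow> bool" where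
  "decomp I M vs \<longleftrightarrow> (\<forall>i\<in>I. \<forall>j\<in>I. M i j = (\<Sum>v\<leftarrow>vs. v i * cnj (v j)))"

lemma qf_eq: "cinner I x (opapply I A x) = qf I A x"
  unfolding cinner_def opapply_def qf_def
  by (rule sum.cong) (auto simp: sum_distrib_left mult.assoc)

lemma psd_iff: "psd I A \<longleftrightarrow> (\<forall>i\<in>I. \<forall>j\<in>I. A i j = cnj (A j i)) \<and>
     (\<forall>v \<in> vecs I. Im (qf I A v) = 0 \<and> Re (qf I A v) \<ge> 0)"
  unfolding psd_def qf_eq ..

lemma cnj_if01[simp]: "cnj (if P then 1 else 0) = (if P then 1 else 0)" by simp

lemma qf_expand:
  assumes "finite I" "a \<in> I"
  shows "qf I A (\<lambda>i. x i + t * (if i = a then 1 else 0)) =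
     qf I A x + t * (\<Sum>i\<in>I. cnj (x i) * A i a) + cnj t * (\<Sum>j\<in>I. A a j * x j) + cnj t * t * A a a"
proof -
  have "qf I A (\<lambda>i. x i + t * (if i = a then 1 else 0)) =
     (\<Sum>i\<in>I. \<Sum>j\<in>I. cnj (x i) * A i j * x j) + (\<Sum>i\<in>I. \<Sum>j\<in>I. cnj (x i) * A i j * (t * (if j = a then 1 else 0)))
     + (\<Sum>i\<in>I. \<Sum>j\<in>I. cnj t * (if i = a then 1 else 0) * A i j * x j)
     + (\<Sum>i\<in>I. \<Sum>j\<in>I. cnj t * (if i = a then 1 else 0) * A i j * (t * (if j = a then 1 else 0)))"
    unfolding qf_def by (simp add: algebra_simps sum.distrib)
  also have "\<dots> = qf I A x + t * (\<Sum>i\<in>I. cnj (x i) * A i a) + cnj t * (\<Sum>j\<in>I. A a j * x j) + cnj t * t * A a a"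
  proof -
    have 1: "(\<Sum>i\<in>I. \<Sum>j\<in>I. cnj (x i) * A i j * (t * (if j = a then 1 else 0))) = t * (\<Sum>i\<in>I. cnj (x i) * A i a)"
      using assms by (simp add: sum_distrib_left algebra_simps if_distrib[where f="\<lambda>z. _ * z"] sum.delta cong: if_cong)
    have 2: "(\<Sum>i\<in>I. \<Sum>j\<in>I. cnj t * (if i = a then 1 else 0) * A i j * x j) = cnj t * (\<Sum>j\<in>I. A a j * x j)"
    proof -
      have "(\<Sum>i\<in>I. \<Sum>j\<in>I. cnj t * (if i = a then 1 else 0) * A i j * x j) = (\<Sum>i\<in>I. if i = a then (\<Sum>j\<in>I. cnj t * A i j * x j) else 0)"
        by (rule sum.cong) auto
      then show ?thesis using assms by (simp add: sum_distrib_left algebra_simps)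
    qed
    have 3: "(\<Sum>i\<in>I. \<Sum>j\<in>I. cnj t * (if i = a then 1 else 0) * A i j * (t * (if j = a then 1 else 0))) = cnj t * t * A a a"
    proof -
      have "(\<Sum>i\<in>I. \<Sum>j\<in>I. cnj t * (if i = a then 1 else 0) * A i j * (t * (if j = a then 1 else 0))) = (\<Sum>i\<in>I. if i = a then (\<Sum>j\<in>I. if j = a then cnj t * A i j * t else 0) else 0)"
        by (intro sum.cong refl) (auto intro!: sum.cong)
      then show ?thesis using assms by (simp add: algebra_simps)
    qed
    show ?thesis unfolding 1 2 3 qf_def ..
  qed
  finally show ?thesis .
qed

lemma qf_zero: "qf I A (\<lambda>_. 0) = 0" by (simp add: qf_def)

lemma herm_real: assumes "z = cnj z" shows "z = complex_of_real (Re z)"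
proof -
  have "Im z = 0" using arg_cong[OF assms, of Im] by simp
  then show ?thesis by (simp add: complex_eq_iff)
qed

lemma cnj_mult_self: "cnj z * z = complex_of_real ((cmod z)^2)"
  by (metis complex_norm_square mult.commute)

lemma qf_ineq:
  assumes fin: "finite I" and a: "a \<in> I" and psd: "psd I A" and x: "x \<in> vecs I"
  shows "Re (qf I A x) + 2 * Re (cnj t * (\<Sum>j\<in>I. A a j * x j)) + (cmod t)^2 * Re (A a a) \<ge> 0"
proof -
  let ?b = "\<Sum>j\<in>I. A a j * x j"
  have herm: "\<forall>i\<in>I. \<forall>j\<in>I. A i j = cnj (A j i)" and pos: "\<forall>v \<in> vecs I. Im (qf I A v) = 0 \<and> Re (qf I A v) \<ge> 0"
    using psd unfolding psd_iff by blast+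
  have c: "(\<Sum>i\<in>I. cnj (x i) * A i a) = cnj ?b"
  proof -
    have "cnj (x i) * A i a = cnj (A a i * x i)" if "i \<in> I" for i
    proof -
      have "A i a = cnj (A a i)" using herm that a by blast
      then show ?thesis by (simp add: mult.commute)
    qed
    then show ?thesis unfolding cnj_sum by (rule sum.cong[OF refl])
  qed
  have "A a a = cnj (A a a)" using herm a by blast
  then have Aaa: "A a a = complex_of_real (Re (A a a))" by (rule herm_real)
  have y: "(\<lambda>i. x i + t * (if i = a then 1 else 0)) \<in> vecs I" using x a by (auto simp: vecs_def)
  have "0 \<le> Re (qf I A (\<lambda>i. x i + t * (if i = a then 1 else 0)))" using pos y by blast
  also have "\<dots> = Re (qf I A x + t * cnj ?b + cnj t * ?b + cnj t * t * A a a)"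
    using qf_expand[OF fin a, of A x t] c by simp
  also have "\<dots> = Re (qf I A x) + 2 * Re (cnj t * ?b) + (cmod t)^2 * Re (A a a)"
  proof -
    have "Re (t * cnj bb) = Re (cnj t * bb)" for bb :: complex by simp
    moreover have "Re (cnj t * t * A a a) = (cmod t)^2 * Re (A a a)"
    proof -
      have "cnj t * t * A a a = complex_of_real ((cmod t)^2 * Re (A a a))"
        by (subst Aaa, simp only: cnj_mult_self of_real_mult)
      then show ?thesis by simp
    qed
    ultimately show ?thesis by (simp only: plus_complex.sel)
  qed
  finally show ?thesis .
qed

lemma sum_delta_right: "finite I \<Longrightarrow> j \<in> I \<Longrightarrow> (\<Sum>k\<in>I. f k * (if k = j then 1 else 0)) = (f j :: complex)"
proof -
  assume "finite I" "j \<in> I"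
  have "(\<Sum>k\<in>I. f k * (if k = j then 1 else 0)) = (\<Sum>k\<in>I. if k = j then f k else 0)"
    by (rule sum.cong) auto
  then show ?thesis using \<open>finite I\<close> \<open>j \<in> I\<close> by simp
qed

lemma row_zero:
  assumes fin: "finite I" and a: "a \<in> I" and psd: "psd I A" and r0: "Re (A a a) = 0" and j: "j \<in> I"
  shows "A a j = 0"
proof (rule ccontr)
  assume nz: "A a j \<noteq> 0"
  define x where "x = (\<lambda>i. if i = j then (1::complex) else 0)"
  have x: "x \<in> vecs I" using j by (auto simp: vecs_def x_def)
  have b: "(\<Sum>k\<in>I. A a k * x k) = A a j" unfolding x_def by (rule sum_delta_right[OF fin j])
  define q where "q = Re (qf I A x)"
  define c where "c = (cmod (A a j))^2"
  have c0: "c > 0" using nz by (simp add: c_def)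
  define s where "s = (\<bar>q\<bar> + 1) / (2 * c)"
  define t where "t = - complex_of_real s * A a j"
  have "q + 2 * Re (cnj t * A a j) + (cmod t)^2 * Re (A a a) \<ge> 0"
    using qf_ineq[OF fin a psd x, of t] b unfolding q_def by simp
  then have "q + 2 * Re (cnj t * A a j) \<ge> 0" using r0 by simp
  moreover have "cnj t * A a j = - complex_of_real (s * c)"
    unfolding t_def c_def by (simp add: cnj_mult_self mult.assoc)
  ultimately have "q - 2 * s * c \<ge> 0" by simp
  moreover have "2 * s * c = \<bar>q\<bar> + 1" using c0 unfolding s_def by simp
  ultimately show False by linarith
qed

lemma e_gen: "cnj b * b / complex_of_real r = complex_of_real ((cmod b)^2 / r)"
  by (simp add: cnj_mult_self)

lemma t_gen: "cnj (- b / complex_of_real r) * b = - complex_of_real ((cmod b)^2 / r)"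
proof -
  have "cnj (- b / complex_of_real r) * b = - (cnj b * b / complex_of_real r)" by simp
  then show ?thesis by (simp only: e_gen)
qed

lemma n_gen: "r > 0 \<Longrightarrow> (cmod (- b / complex_of_real r))^2 * r = (cmod b)^2 / r"
  by (simp add: norm_divide power2_eq_square)

lemma chol_aux:
  assumes fin: "finite I"
  shows "finite J \<Longrightarrow> J \<subseteq> I \<Longrightarrow> psd I A \<Longrightarrow> (\<forall>i\<in>I. \<forall>j\<in>I. i \<notin> J \<or> j \<notin> J \<longrightarrow> A i j = 0)
     \<Longrightarrow> \<exists>vs. decomp I A vs"
proof (induction J arbitrary: A rule: finite_induct)
  case empty
  then show ?case by (auto simp: decomp_def intro!: exI[of _ "[]"])
next
  case (insert a F A)
  have a: "a \<in> I" using insert by auto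
  have psd: "psd I A" using insert by blast
  have herm: "\<forall>i\<in>I. \<forall>j\<in>I. A i j = cnj (A j i)" and pos: "\<forall>v \<in> vecs I. Im (qf I A v) = 0 \<and> Re (qf I A v) \<ge> 0"
    using psd unfolding psd_iff by blast+
  have supp: "\<forall>i\<in>I. \<forall>j\<in>I. i \<notin> insert a F \<or> j \<notin> insert a F \<longrightarrow> A i j = 0" using insert by blast
  have "A a a = cnj (A a a)" using herm a by blast
  then have Aaa: "A a a = complex_of_real (Re (A a a))" by (rule herm_real)
  define r where "r = Re (A a a)"
  have r0: "r \<ge> 0"
  proof -
    have "0 \<le> Re (qf I A (\<lambda>_. 0)) + 2 * Re (cnj 1 * (\<Sum>j\<in>I. A a j * 0)) + (cmod 1)^2 * Re (A a a)"
      by (rule qf_ineq[OF fin a psd]) (simp add: vecs_def)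
    then show ?thesis by (simp add: qf_zero r_def)
  qed
  show ?case
  proof (cases "r = 0")
    case True
    have row: "A a j = 0" if "j \<in> I" for j using row_zero[OF fin a psd _ that] True r_def by simp
    have col: "A j a = 0" if "j \<in> I" for j
    proof -
      have "A j a = cnj (A a j)" using herm a that by blast
      then show ?thesis using row[OF that] by simp
    qed
    have "\<forall>i\<in>I. \<forall>j\<in>I. i \<notin> F \<or> j \<notin> F \<longrightarrow> A i j = 0"
    proof (intro ballI impI)
      fix i j assume ij: "i \<in> I" "j \<in> I" "i \<notin> F \<or> j \<notin> F"
      show "A i j = 0"
      proof (cases "i = a \<or> j = a")
        case True then show ?thesis using row col ij by blast
      next
        case False then show ?thesis using supp ij by blast
      qed
    qed
    then show ?thesis using insert.IH[of A] insert.prems psd by blast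
  next
    case False
    then have rp: "r > 0" using r0 by simp
    define v where "v = (\<lambda>i. (if i \<in> I then A i a else 0) / complex_of_real (sqrt r))"
    define A' where "A' = (\<lambda>i j. A i j - v i * cnj (v j))"
    have vv: "v i * cnj (v j) = A i a * A a j / complex_of_real r" if "i \<in> I" "j \<in> I" for i j
    proof -
      have "A a j = cnj (A j a)" using herm a that by blast
      moreover have "complex_of_real (sqrt r) * complex_of_real (sqrt r) = complex_of_real r"
        using r0 by (simp flip: of_real_mult)
      moreover have "v i * cnj (v j) = A i a * cnj (A j a) / (complex_of_real (sqrt r) * complex_of_real (sqrt r))"
        unfolding v_def using that by simp
      ultimately show ?thesis by simp
    qed
    have A'e: "A' i j = A i j - A i a * A a j / complex_of_real r" if "i \<in> I" "j \<in> I" for i j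
      using vv[OF that] unfolding A'_def by simp
    have Aaa': "A a a = complex_of_real r" using Aaa r_def by simp
    have herm': "\<forall>i\<in>I. \<forall>j\<in>I. A' i j = cnj (A' j i)"
    proof (intro ballI)
      fix i j assume ij: "i \<in> I" "j \<in> I"
      have h1: "A i j = cnj (A j i)" using herm ij by blast
      have h2: "A i a = cnj (A a i)" using herm ij a by blast
      have h3: "A a j = cnj (A j a)" using herm ij a by blast
      show "A' i j = cnj (A' j i)" unfolding A'e[OF ij] A'e[OF ij(2,1)]
        by (simp add: h1 h2 h3 mult.commute)
    qed
    have qf': "qf I A' x = qf I A x - cnj (\<Sum>j\<in>I. A a j * x j) * (\<Sum>j\<in>I. A a j * x j) / complex_of_real r" for x
    proof -
      have c: "(\<Sum>i\<in>I. cnj (x i) * A i a) = cnj (\<Sum>j\<in>I. A a j * x j)"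
      proof -
        have "cnj (x i) * A i a = cnj (A a i * x i)" if "i \<in> I" for i
        proof -
          have "A i a = cnj (A a i)" using herm that a by blast
          then show ?thesis by (simp add: mult.commute)
        qed
        then show ?thesis unfolding cnj_sum by (rule sum.cong[OF refl])
      qed
      have "qf I A' x = (\<Sum>i\<in>I. \<Sum>j\<in>I. cnj (x i) * A i j * x j - (cnj (x i) * A i a) * (A a j * x j) / complex_of_real r)"
        unfolding qf_def by (intro sum.cong refl) (simp add: A'e algebra_simps)
      also have "\<dots> = qf I A x - (\<Sum>i\<in>I. cnj (x i) * A i a) * (\<Sum>j\<in>I. A a j * x j) / complex_of_real r"
        unfolding qf_def by (simp add: sum_subtractf sum_distrib_left sum_distrib_right sum_divide_distrib) (rule sum.swap)
      finally show ?thesis unfolding c .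
    qed
    have psd': "psd I A'"
      unfolding psd_iff
    proof (intro conjI herm' ballI)
      fix x assume x: "x \<in> vecs I"
      let ?b = "\<Sum>j\<in>I. A a j * x j"
      have e: "cnj ?b * ?b / complex_of_real r = complex_of_real ((cmod ?b)^2 / r)"
        by (rule e_gen)
      define t where "t = - ?b / complex_of_real r"
      have "0 \<le> Re (qf I A x) + 2 * Re (cnj t * ?b) + (cmod t)^2 * Re (A a a)"
        by (rule qf_ineq[OF fin a psd x])
      moreover have "cnj t * ?b = - complex_of_real ((cmod ?b)^2 / r)"
        unfolding t_def by (rule t_gen)
      moreover have "(cmod t)^2 * Re (A a a) = (cmod ?b)^2 / r"
        unfolding t_def using rp r_def n_gen by simp
      ultimately have ge: "Re (qf I A x) \<ge> (cmod ?b)^2 / r" by simp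
      show "Im (qf I A' x) = 0" using pos x unfolding qf' e by simp
      show "Re (qf I A' x) \<ge> 0" using ge unfolding qf' e by simp
    qed
    have supp': "\<forall>i\<in>I. \<forall>j\<in>I. i \<notin> F \<or> j \<notin> F \<longrightarrow> A' i j = 0"
    proof (intro ballI impI)
      fix i j assume ij: "i \<in> I" "j \<in> I" and o: "i \<notin> F \<or> j \<notin> F"
      show "A' i j = 0"
      proof (cases "i = a")
        case True then show ?thesis using A'e[OF ij] Aaa' rp by simp
      next
        case ia: False
        show ?thesis
        proof (cases "j = a")
          case True then show ?thesis using A'e[OF ij] Aaa' rp by simp
        next
          case ja: False
          have "i \<notin> insert a F \<or> j \<notin> insert a F" using o ia ja by blast
          then have "A i j = 0" "A i a = 0 \<or> A a j = 0" using supp ij a by blast+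
          then show ?thesis using A'e[OF ij] by auto
        qed
      qed
    qed
    obtain vs where vs: "decomp I A' vs" using insert.IH[of A'] insert.prems psd' supp' by blast
    have "decomp I A (v # vs)"
      unfolding decomp_def
    proof (intro ballI)
      fix i j assume ij: "i \<in> I" "j \<in> I"
      then have "A' i j = (\<Sum>v\<leftarrow>vs. v i * cnj (v j))" using vs unfolding decomp_def by blast
      then show "A i j = (\<Sum>v\<leftarrow>v # vs. v i * cnj (v j))" unfolding A'_def by (simp add: algebra_simps)
    qed
    then show ?thesis by blast
  qed
qed

lemma chol:
  assumes "finite I" "psd I A" shows "\<exists>vs. decomp I A vs"
  using chol_aux[OF assms(1) assms(1) _ assms(2)] by blast




definition tpow :: "nat \<Rightarrow> (('a \<times> 'b) \<Rightarrow> ('a \<times> 'b) \<Rightarrow> complex) \<Rightarrow> ('a list \<times> 'b list) \<Rightarrow> ('a list \<times> 'b list) \<Rightarrow> complex" where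
  "tpow k M = (\<lambda>(xs, ys) (xs', ys'). \<Prod>l<k. M (xs ! l, ys ! l) (xs' ! l, ys' ! l))"

definition tens :: "('a \<times> 'b \<Rightarrow> complex) \<Rightarrow> ('a list \<times> 'b list \<Rightarrow> complex) \<Rightarrow> ('a list \<times> 'b list \<Rightarrow> complex)" where
  "tens w u = (\<lambda>(xs, ys). if xs \<noteq> [] \<and> ys \<noteq> [] then w (hd xs, hd ys) * u (tl xs, tl ys) else 0)"

definition spans :: "'i set \<Rightarrow> ('i \<Rightarrow> complex) list \<Rightarrow> bool" where
  "spans I vs \<longleftrightarrow> (\<forall>x\<in>vecs I. (\<forall>v\<in>set vs. cinner I v x = 0) \<longrightarrow> x = (\<lambda>_. 0))"

lemma lk_Suc_mem: "xs \<in> lists_k (Suc k) X \<longleftrightarrow> xs \<noteq> [] \<and> hd xs \<in> X \<and> tl xs \<in> lists_k k X"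
  by (cases xs) (auto simp: lists_k_def)

lemma lk_0: "lists_k 0 X = {[]}" by (auto simp: lists_k_def)

lemma finite_lk: "finite X \<Longrightarrow> finite (lists_k k X)"
  unfolding lists_k_def using finite_lists_length_eq[of X k] by (simp add: conj_commute)

lemma sum_Idx_Suc:
  "(\<Sum>a\<in>lists_k (Suc k) X \<times> lists_k (Suc k) Y. f a) =
   (\<Sum>c\<in>X \<times> Y. \<Sum>d\<in>lists_k k X \<times> lists_k k Y. f (fst c # fst d, snd c # snd d))"
proof -
  have "(\<Sum>a\<in>lists_k (Suc k) X \<times> lists_k (Suc k) Y. f a) =
     (\<Sum>p\<in>(X \<times> Y) \<times> (lists_k k X \<times> lists_k k Y). f (fst (fst p) # fst (snd p), snd (fst p) # snd (snd p)))"
    by (rule sum.reindex_bij_witness[of _ "\<lambda>p. (fst (fst p) # fst (snd p), snd (fst p) # snd (snd p))"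
          "\<lambda>a. ((hd (fst a), hd (snd a)), (tl (fst a), tl (snd a)))"])
       (auto simp: lk_Suc_mem)
  also have "\<dots> = (\<Sum>c\<in>X \<times> Y. \<Sum>d\<in>lists_k k X \<times> lists_k k Y. f (fst c # fst d, snd c # snd d))"
    unfolding sum.cartesian_product by (simp add: case_prod_beta)
  finally show ?thesis .
qed

lemma tpow_Suc: "tpow (Suc k) M (x # xs, y # ys) (x' # xs', y' # ys') = M (x, y) (x', y') * tpow k M (xs, ys) (xs', ys')"
  unfolding tpow_def prod.lessThan_Suc_shift by simp

lemma sum_list_concat_map2:
  "(\<Sum>v\<leftarrow>concat (map (\<lambda>w. map (g w) us) ws). f v) = (\<Sum>w\<leftarrow>ws. \<Sum>u\<leftarrow>us. f (g w u))"
  by (induction ws) (simp_all add: o_def)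

lemma sum_list_mult_distrib:
  "(\<Sum>w\<leftarrow>ws. F w) * (\<Sum>u\<leftarrow>us. G u) = (\<Sum>w\<leftarrow>ws. \<Sum>u\<leftarrow>us. F w * (G u :: complex))"
proof (induction ws)
  case Nil then show ?case by simp
next
  case (Cons w ws)
  have "F w * (\<Sum>u\<leftarrow>us. G u) = (\<Sum>u\<leftarrow>us. F w * G u)" by (induction us) (simp_all add: algebra_simps)
  then show ?case using Cons by (simp add: algebra_simps)
qed

lemma tpow_decomp:
  fixes X :: "'a set" and Y :: "'b set" and P :: "('a \<times> 'b) \<Rightarrow> ('a \<times> 'b) \<Rightarrow> complex"
  assumes fX: "finite X" and fY: "finite Y" and dP: "decomp (X \<times> Y) P ws" and sP: "spans (X \<times> Y) ws"
  shows "\<exists>us. decomp (lists_k k X \<times> lists_k k Y) (tpow k P) us \<and> spans (lists_k k X \<times> lists_k k Y) us"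
proof (induction k)
  case 0
  have d: "decomp (lists_k 0 X \<times> lists_k 0 Y) (tpow 0 P) [\<lambda>_. 1]"
    by (simp add: decomp_def tpow_def lk_0)
  have s: "spans (lists_k 0 X \<times> lists_k 0 Y) [\<lambda>_. 1]"
    unfolding spans_def
  proof (intro ballI impI)
    fix x :: "'a list \<times> 'b list \<Rightarrow> complex"
    assume x: "x \<in> vecs (lists_k 0 X \<times> lists_k 0 Y)" and "\<forall>v\<in>set [\<lambda>_. 1]. cinner (lists_k 0 X \<times> lists_k 0 Y) v x = 0"
    then have "x ([], []) = 0" by (simp add: cinner_def lk_0)
    show "x = (\<lambda>_. 0)"
    proof
      fix p show "x p = 0"
      proof (cases "p = ([], [])")
        case True then show ?thesis using \<open>x ([], []) = 0\<close> by simp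
      next
        case False then show ?thesis using x by (cases p) (auto simp: vecs_def lk_0)
      qed
    qed
  qed
  show ?case using d s by blast
next
  case (Suc k)
  let ?I = "lists_k k X \<times> lists_k k Y"
  let ?J = "lists_k (Suc k) X \<times> lists_k (Suc k) Y"
  let ?C = "X \<times> Y"
  obtain us where du: "decomp ?I (tpow k P) us" and su: "spans ?I us" using Suc by blast
  define us' where "us' = concat (map (\<lambda>w. map (tens w) us) ws)"
  have mem: "\<exists>c d. c \<in> ?C \<and> d \<in> ?I \<and> a = (fst c # fst d, snd c # snd d)" if "a \<in> ?J" for a
    using that by (intro exI[of _ "(hd (fst a), hd (snd a))"] exI[of _ "(tl (fst a), tl (snd a))"])
      (auto simp: lk_Suc_mem)
  have tens_eq: "tens w u (fst c # fst d, snd c # snd d) = w c * u d" for w u c d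
    by (simp add: tens_def)
  have d: "decomp ?J (tpow (Suc k) P) us'"
    unfolding decomp_def
  proof (intro ballI)
    fix a b assume a: "a \<in> ?J" and b: "b \<in> ?J"
    obtain c d where cd: "c \<in> ?C" "d \<in> ?I" "a = (fst c # fst d, snd c # snd d)" using mem[OF a] by blast
    obtain c' d' where cd': "c' \<in> ?C" "d' \<in> ?I" "b = (fst c' # fst d', snd c' # snd d')" using mem[OF b] by blast
    have "tpow (Suc k) P a b = P c c' * tpow k P d d'"
      unfolding cd(3) cd'(3) tpow_Suc by simp
    also have "\<dots> = (\<Sum>w\<leftarrow>ws. w c * cnj (w c')) * (\<Sum>u\<leftarrow>us. u d * cnj (u d'))"
    proof -
      have "P c c' = (\<Sum>w\<leftarrow>ws. w c * cnj (w c'))" using dP cd(1) cd'(1) unfolding decomp_def by blast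
      moreover have "tpow k P d d' = (\<Sum>u\<leftarrow>us. u d * cnj (u d'))" using du cd(2) cd'(2) unfolding decomp_def by blast
      ultimately show ?thesis by simp
    qed
    also have "\<dots> = (\<Sum>w\<leftarrow>ws. \<Sum>u\<leftarrow>us. (w c * u d) * cnj (w c' * u d'))"
      unfolding sum_list_mult_distrib by (simp add: algebra_simps)
    also have "\<dots> = (\<Sum>v\<leftarrow>us'. v a * cnj (v b))"
      unfolding us'_def sum_list_concat_map2 cd(3) cd'(3) tens_eq ..
    finally show "tpow (Suc k) P a b = (\<Sum>v\<leftarrow>us'. v a * cnj (v b))" .
  qed
  have s: "spans ?J us'"
    unfolding spans_def
  proof (intro ballI impI)
    fix x assume x: "x \<in> vecs ?J" and orth: "\<forall>v\<in>set us'. cinner ?J v x = 0"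
    have zw: "(\<Sum>c\<in>?C. cnj (w c) * x (fst c # fst d, snd c # snd d)) = 0" if w: "w \<in> set ws" and dI: "d \<in> ?I" for w d
    proof -
      define z where "z = (\<lambda>d. if d \<in> ?I then (\<Sum>c\<in>?C. cnj (w c) * x (fst c # fst d, snd c # snd d)) else 0)"
      have zv: "z \<in> vecs ?I" by (simp add: z_def vecs_def)
      have "cinner ?I u z = 0" if u: "u \<in> set us" for u
      proof -
        have "cinner ?I u z = (\<Sum>d\<in>?I. \<Sum>c\<in>?C. cnj (w c * u d) * x (fst c # fst d, snd c # snd d))"
          unfolding cinner_def z_def by (intro sum.cong refl) (simp add: sum_distrib_left algebra_simps)
        also have "\<dots> = (\<Sum>c\<in>?C. \<Sum>d\<in>?I. cnj (w c * u d) * x (fst c # fst d, snd c # snd d))"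
          by (rule sum.swap)
        also have "\<dots> = cinner ?J (tens w u) x"
          unfolding cinner_def sum_Idx_Suc tens_eq ..
        also have "\<dots> = 0" using orth w u unfolding us'_def by auto
        finally show ?thesis .
      qed
      then have "z = (\<lambda>_. 0)" using su zv unfolding spans_def by blast
      then have "z d = 0" by simp
      then show ?thesis using dI by (simp add: z_def)
    qed
    have xa: "x a = 0" if a: "a \<in> ?J" for a
    proof -
      obtain c d where cd: "c \<in> ?C" "d \<in> ?I" "a = (fst c # fst d, snd c # snd d)" using mem[OF a] by blast
      define y where "y = (\<lambda>c. if c \<in> ?C then x (fst c # fst d, snd c # snd d) else 0)"
      have yv: "y \<in> vecs ?C" by (simp add: y_def vecs_def)
      have "cinner ?C w y = 0" if "w \<in> set ws" for w
        using zw[OF that cd(2)] unfolding cinner_def y_def by (simp cong: sum.cong)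
      then have "y = (\<lambda>_. 0)" using sP yv unfolding spans_def by blast
      then have "y c = 0" by simp
      then show ?thesis using cd by (simp add: y_def)
    qed
    show "x = (\<lambda>_. 0)"
    proof
      fix a show "x a = 0"
      proof (cases "a \<in> ?J")
        case True then show ?thesis using xa by blast
      next
        case False then show ?thesis using x unfolding vecs_def by blast
      qed
    qed
  qed
  show ?case using d s by blast
qed




lemma sum_sum_list_swap: "(\<Sum>i\<in>I. \<Sum>v\<leftarrow>vs. f i v) = (\<Sum>v\<leftarrow>vs. \<Sum>i\<in>I. (f i v :: complex))"
  by (induction vs) (simp_all add: sum.distrib)

lemma decomp_qf:
  assumes "decomp I M us"
  shows "qf I M v = (\<Sum>u\<leftarrow>us. cnj (cinner I u v) * cinner I u v)"
proof -
  have "qf I M v = (\<Sum>i\<in>I. \<Sum>j\<in>I. \<Sum>u\<leftarrow>us. (cnj (v i) * u i) * (cnj (u j) * v j))"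
    unfolding qf_def
  proof (intro sum.cong refl)
    fix i j assume "i \<in> I" "j \<in> I"
    then have "M i j = (\<Sum>u\<leftarrow>us. u i * cnj (u j))" using assms unfolding decomp_def by blast
    moreover have "cnj (v i) * (\<Sum>u\<leftarrow>us. u i * cnj (u j)) * v j = (\<Sum>u\<leftarrow>us. (cnj (v i) * u i) * (cnj (u j) * v j))"
      by (induction us) (simp_all add: algebra_simps)
    ultimately show "cnj (v i) * M i j * v j = (\<Sum>u\<leftarrow>us. (cnj (v i) * u i) * (cnj (u j) * v j))" by simp
  qed
  also have "\<dots> = (\<Sum>u\<leftarrow>us. \<Sum>i\<in>I. \<Sum>j\<in>I. (cnj (v i) * u i) * (cnj (u j) * v j))"
    by (simp only: sum_sum_list_swap)
  also have "\<dots> = (\<Sum>u\<leftarrow>us. cnj (cinner I u v) * cinner I u v)"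
    unfolding cinner_def by (simp add: cnj_sum sum_product mult.commute)
  finally show ?thesis .
qed

lemma trace_decomp:
  assumes "decomp I A vs"
  shows "(\<Sum>b\<in>I. \<Sum>a\<in>I. Q b a * A a b) = (\<Sum>v\<leftarrow>vs. qf I Q v)"
proof -
  have "(\<Sum>b\<in>I. \<Sum>a\<in>I. Q b a * A a b) = (\<Sum>b\<in>I. \<Sum>a\<in>I. \<Sum>v\<leftarrow>vs. cnj (v b) * Q b a * v a)"
  proof (intro sum.cong refl)
    fix a b assume "a \<in> I" "b \<in> I"
    then have "A a b = (\<Sum>v\<leftarrow>vs. v a * cnj (v b))" using assms unfolding decomp_def by blast
    moreover have "Q b a * (\<Sum>v\<leftarrow>vs. v a * cnj (v b)) = (\<Sum>v\<leftarrow>vs. cnj (v b) * Q b a * v a)"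
      by (induction vs) (simp_all add: algebra_simps)
    ultimately show "Q b a * A a b = (\<Sum>v\<leftarrow>vs. cnj (v b) * Q b a * v a)" by simp
  qed
  also have "\<dots> = (\<Sum>v\<leftarrow>vs. qf I Q v)"
    unfolding qf_def by (simp only: sum_sum_list_swap)
  finally show ?thesis .
qed

lemma pos_sum_list: "x \<in> set xs \<Longrightarrow> (\<forall>y\<in>set xs. f y \<ge> 0) \<Longrightarrow> f x > 0 \<Longrightarrow> (\<Sum>y\<leftarrow>xs. f y) > (0::real)"
proof (induction xs)
  case Nil then show ?case by simp
next
  case (Cons a xs)
  have n: "(\<Sum>y\<leftarrow>xs. f y) \<ge> 0" using Cons.prems(2) by (intro sum_list_nonneg) auto
  show ?case
  proof (cases "x = a")
    case True then show ?thesis using Cons.prems n by simp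
  next
    case False then show ?thesis using Cons by (simp add: add_nonneg_pos)
  qed
qed

lemma double_real:
  "(\<Sum>v\<leftarrow>vs. \<Sum>u\<leftarrow>us. cnj (g u v) * g u v) = complex_of_real (\<Sum>v\<leftarrow>vs. \<Sum>u\<leftarrow>us. (cmod (g u v))^2)"
proof -
  have i: "(\<Sum>u\<leftarrow>us. cnj (g u v) * g u v) = complex_of_real (\<Sum>u\<leftarrow>us. (cmod (g u v))^2)" for v
    by (induction us) (simp_all add: cnj_mult_self)
  show ?thesis unfolding i by (induction vs) simp_all
qed

lemma lk_nth: "xs \<in> lists_k k X \<Longrightarrow> l < k \<Longrightarrow> xs ! l \<in> X"
  by (auto simp: lists_k_def)




lemma tpow_herm:
  assumes herm: "\<forall>i\<in>X \<times> Y. \<forall>j\<in>X \<times> Y. \<sigma> i j = cnj (\<sigma> j i)"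
    and a: "a \<in> lists_k k X \<times> lists_k k Y" and b: "b \<in> lists_k k X \<times> lists_k k Y"
  shows "tpow k \<sigma> b a = cnj (tpow k \<sigma> a b)"
proof -
  obtain xa ya xb yb where ab: "a = (xa, ya)" "b = (xb, yb)" by (cases a, cases b)
  have "\<sigma> (xb ! l, yb ! l) (xa ! l, ya ! l) = cnj (\<sigma> (xa ! l, ya ! l) (xb ! l, yb ! l))" if "l \<in> {..<k}" for l
  proof -
    have "(xa ! l, ya ! l) \<in> X \<times> Y" "(xb ! l, yb ! l) \<in> X \<times> Y" using a b ab that by (auto intro: lk_nth)
    then show ?thesis using herm by blast
  qed
  then show ?thesis unfolding ab tpow_def by (simp add: cnj_prod)
qed

lemma T2:
  shows "(\<Sum>b\<in>I \<times> J. \<Sum>a\<in>I \<times> J. tpow k \<sigma> b a * E a b) =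
         (\<Sum>b\<in>I \<times> J. \<Sum>a\<in>I \<times> J. tpow k (partial_transpose \<sigma>) b a * partial_transpose E a b)"
proof -
  let ?g = "\<lambda>(b, a). ((fst b, snd a), (fst a, snd b))"
  have "(\<Sum>b\<in>I \<times> J. \<Sum>a\<in>I \<times> J. tpow k \<sigma> b a * E a b) = (\<Sum>p\<in>(I \<times> J) \<times> (I \<times> J). tpow k \<sigma> (fst p) (snd p) * E (snd p) (fst p))"
    unfolding sum.cartesian_product by (simp add: case_prod_beta)
  also have "\<dots> = (\<Sum>p\<in>(I \<times> J) \<times> (I \<times> J). tpow k \<sigma> (fst (?g p)) (snd (?g p)) * E (snd (?g p)) (fst (?g p)))"
    by (rule sum.reindex_bij_witness[of _ ?g ?g]) auto
  also have "\<dots> = (\<Sum>p\<in>(I \<times> J) \<times> (I \<times> J). tpow k (partial_transpose \<sigma>) (fst p) (snd p) * partial_transpose E (snd p) (fst p))"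
  proof (intro sum.cong refl)
    fix p :: "(('a list \<times> 'b list) \<times> ('a list \<times> 'b list))"
    obtain xb yb xa ya where p: "p = ((xb, yb), (xa, ya))" by (cases p) auto
    show "tpow k \<sigma> (fst (?g p)) (snd (?g p)) * E (snd (?g p)) (fst (?g p)) =
       tpow k (partial_transpose \<sigma>) (fst p) (snd p) * partial_transpose E (snd p) (fst p)"
      unfolding p by (simp add: tpow_def partial_transpose_def)
  qed
  also have "\<dots> = (\<Sum>b\<in>I \<times> J. \<Sum>a\<in>I \<times> J. tpow k (partial_transpose \<sigma>) b a * partial_transpose E a b)"
    unfolding sum.cartesian_product by (simp add: case_prod_beta)
  finally show ?thesis .
qed

lemma sum_list_zero: "(\<forall>x\<in>set xs. f x = 0) \<Longrightarrow> (\<Sum>x\<leftarrow>xs. f x) = (0::complex)"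
  by (induction xs) auto

theorem lemma2:
  fixes X :: "'a set" and Y :: "'b set"
    and S :: "('a \<times> 'b \<Rightarrow> complex) set"
    and \<sigma> :: "('a \<times> 'b) \<Rightarrow> ('a \<times> 'b) \<Rightarrow> complex"
  assumes "finite X" and "finite Y"
    and "is_subspace (X \<times> Y) S"
    and "ppt_definite (X \<times> Y) \<sigma>"
    and "support (X \<times> Y) \<sigma> \<subseteq> S"
  shows "strongly_ppt_unextendible X Y S"
  unfolding strongly_ppt_unextendible_def
proof (intro allI impI notI)
  fix k :: nat assume "k > 0" and ext: "ppt_extendible (lists_k k X \<times> lists_k k Y) (tensor_power_space k S)"
  let ?C = "X \<times> Y"
  let ?I = "lists_k k X \<times> lists_k k Y"
  let ?P = "partial_transpose \<sigma>"
  have fC: "finite ?C" using assms(1,2) by simp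
  have fI: "finite ?I" using assms(1,2) by (simp add: finite_lk)
  obtain E where Enz: "op_nonzero ?I E" and Eppt: "ppt ?I E" and Esupp: "support ?I E \<subseteq> orth_compl ?I (tensor_power_space k S)"
    using ext unfolding ppt_extendible_def by blast
  have psd\<sigma>: "psd ?C \<sigma>" and pdP: "pos_def ?C ?P" using assms(4) unfolding ppt_definite_def by blast+
  have herm\<sigma>: "\<forall>i\<in>?C. \<forall>j\<in>?C. \<sigma> i j = cnj (\<sigma> j i)" using psd\<sigma> unfolding psd_def by blast
  have psdP: "psd ?C ?P" using pdP unfolding pos_def_def by blast
  obtain ws where dP: "decomp ?C ?P ws" using chol[OF fC psdP] by blast
  have sP: "spans ?C ws"
    unfolding spans_def
  proof (intro ballI impI)
    fix x assume x: "x \<in> vecs ?C" and o: "\<forall>v\<in>set ws. cinner ?C v x = 0"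
    have "qf ?C ?P x = 0" unfolding decomp_qf[OF dP] using o by (induction ws) auto
    then have "Re (cinner ?C x (opapply ?C ?P x)) = 0" unfolding qf_eq by simp
    have pd: "\<forall>v\<in>vecs ?C. v \<noteq> (\<lambda>_. 0) \<longrightarrow> Re (cinner ?C v (opapply ?C ?P v)) > 0"
      using pdP unfolding pos_def_def by blast
    show "x = (\<lambda>_. 0)"
    proof (rule ccontr)
      assume "x \<noteq> (\<lambda>_. 0)"
      then have "Re (cinner ?C x (opapply ?C ?P x)) > 0" using pd x by blast
      then show False using \<open>Re (cinner ?C x (opapply ?C ?P x)) = 0\<close> by simp
    qed
  qed
  obtain us where du: "decomp ?I (tpow k ?P) us" and su: "spans ?I us"
    using tpow_decomp[OF assms(1,2) dP sP] by blast
  have psdE: "psd ?I (partial_transpose E)" using Eppt unfolding ppt_def by blast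
  obtain vs where dE: "decomp ?I (partial_transpose E) vs" using chol[OF fI psdE] by blast

  have orth: "(\<Sum>a\<in>?I. cnj (tpow k \<sigma> a b') * E a b) = 0" if b: "b \<in> ?I" and b': "b' \<in> ?I" for b b'
  proof -
    define e where "e = (\<lambda>i. if i = b then (1::complex) else 0)"
    have ev: "e \<in> vecs ?I" using b by (auto simp: vecs_def e_def)
    have "opapply ?I E e \<in> orth_compl ?I (tensor_power_space k S)" using Esupp ev unfolding support_def by blast
    then have o: "\<forall>s\<in>tensor_power_space k S. cinner ?I s (opapply ?I E e) = 0" unfolding orth_compl_def by blast
    obtain xs' ys' where b'e: "b' = (xs', ys')" by (cases b')
    define col where "col = (\<lambda>c. opapply ?C \<sigma> (\<lambda>i. if i = c then (1::complex) else 0))"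
    define sv where "sv = (\<lambda>l. col (xs' ! l, ys' ! l))"
    have colS: "col c \<in> S" if "c \<in> ?C" for c
    proof -
      have "(\<lambda>i. if i = c then (1::complex) else 0) \<in> vecs ?C" using that by (auto simp: vecs_def)
      then have "col c \<in> support ?C \<sigma>" unfolding col_def support_def by blast
      then show ?thesis using assms(5) by blast
    qed
    have svS: "sv l \<in> S" if "l < k" for l
      unfolding sv_def using b' b'e that by (auto intro!: colS lk_nth)
    have mem: "prod_vec k sv \<in> tensor_power_space k S"
      unfolding tensor_power_space_def
      by (rule CollectI, rule exI[of _ 1], rule exI[of _ "\<lambda>_. 1"], rule exI[of _ "\<lambda>_. sv"]) (simp add: svS)
    have col_eq: "col c p = \<sigma> p c" if "c \<in> ?C" "p \<in> ?C" for c p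
    proof -
      have "col c p = (\<Sum>j\<in>?C. \<sigma> p j * (if j = c then 1 else 0))" using that by (simp add: col_def opapply_def)
      also have "\<dots> = \<sigma> p c" by (rule sum_delta_right[OF fC that(1)])
      finally show ?thesis .
    qed
    have pv: "prod_vec k sv a = tpow k \<sigma> a b'" if a: "a \<in> ?I" for a
    proof -
      obtain xs ys where ae: "a = (xs, ys)" by (cases a)
      have len: "length xs = k" "length ys = k" using a ae by (auto simp: lists_k_def)
      have "sv l (xs ! l, ys ! l) = \<sigma> (xs ! l, ys ! l) (xs' ! l, ys' ! l)" if "l \<in> {..<k}" for l
        unfolding sv_def using that a ae b' b'e by (intro col_eq) (auto intro: lk_nth)
      then show ?thesis unfolding ae b'e prod_vec_def tpow_def using len by simp
    qed
    have Ee: "opapply ?I E e a = E a b" if "a \<in> ?I" for a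
      using that sum_delta_right[OF fI b, of "E a"] by (simp add: opapply_def e_def)
    have "0 = cinner ?I (prod_vec k sv) (opapply ?I E e)" using o mem by simp
    also have "\<dots> = (\<Sum>a\<in>?I. cnj (tpow k \<sigma> a b') * E a b)"
      unfolding cinner_def by (intro sum.cong refl) (simp add: pv Ee)
    finally show ?thesis by simp
  qed
  have T1: "(\<Sum>b\<in>?I. \<Sum>a\<in>?I. tpow k \<sigma> b a * E a b) = 0"
  proof -
    have "(\<Sum>a\<in>?I. tpow k \<sigma> b a * E a b) = 0" if b: "b \<in> ?I" for b
    proof -
      have "(\<Sum>a\<in>?I. tpow k \<sigma> b a * E a b) = (\<Sum>a\<in>?I. cnj (tpow k \<sigma> a b) * E a b)"
        by (intro sum.cong refl) (simp add: tpow_herm[OF herm\<sigma> _ b])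
      then show ?thesis using orth[OF b b] by simp
    qed
    then show ?thesis by simp
  qed
  have T3: "(\<Sum>b\<in>?I. \<Sum>a\<in>?I. tpow k ?P b a * partial_transpose E a b) =
     complex_of_real (\<Sum>v\<leftarrow>vs. \<Sum>u\<leftarrow>us. (cmod (cinner ?I u v))^2)"
    unfolding trace_decomp[OF dE] decomp_qf[OF du] by (rule double_real)
  obtain a b where ab: "a \<in> ?I" "b \<in> ?I" "E a b \<noteq> 0" using Enz unfolding op_nonzero_def by blast
  obtain xa ya xb yb where abe: "a = (xa, ya)" "b = (xb, yb)" by (cases a, cases b)
  let ?a = "(xa, yb)" and ?b = "(xb, ya)"
  have ab': "?a \<in> ?I" "?b \<in> ?I" using ab abe by auto
  have "partial_transpose E ?a ?b \<noteq> 0" using ab abe by (simp add: partial_transpose_def)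
  moreover have "partial_transpose E ?a ?b = (\<Sum>v\<leftarrow>vs. v ?a * cnj (v ?b))"
    using dE ab' unfolding decomp_def by blast
  ultimately have "(\<Sum>v\<leftarrow>vs. v ?a * cnj (v ?b)) \<noteq> 0" by simp
  then obtain v where v: "v \<in> set vs" "v ?a \<noteq> 0"
    using sum_list_zero[of vs "\<lambda>v. v ?a * cnj (v ?b)"] by auto
  define v' where "v' = (\<lambda>i. if i \<in> ?I then v i else 0)"
  have v'v: "v' \<in> vecs ?I" by (simp add: v'_def vecs_def)
  have "v' \<noteq> (\<lambda>_. 0)" using v ab' by (auto simp: v'_def fun_eq_iff)
  then obtain u where u: "u \<in> set us" "cinner ?I u v' \<noteq> 0" using su v'v unfolding spans_def by blast
  have "cinner ?I u v' = cinner ?I u v" unfolding cinner_def v'_def by (intro sum.cong refl) simp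
  then have uv: "cinner ?I u v \<noteq> 0" using u by simp
  have "(\<Sum>v\<leftarrow>vs. \<Sum>u\<leftarrow>us. (cmod (cinner ?I u v))^2) > 0"
  proof (rule pos_sum_list[OF v(1)])
    show "\<forall>y\<in>set vs. 0 \<le> (\<Sum>u\<leftarrow>us. (cmod (cinner ?I u y))^2)" by (intro ballI sum_list_nonneg) auto
    show "0 < (\<Sum>u\<leftarrow>us. (cmod (cinner ?I u v))^2)"
      by (rule pos_sum_list[OF u(1)]) (use uv in auto)
  qed
  moreover have "(\<Sum>v\<leftarrow>vs. \<Sum>u\<leftarrow>us. (cmod (cinner ?I u v))^2) = 0"
    using T1 T2[where I="lists_k k X" and J="lists_k k Y" and k=k and \<sigma>=\<sigma> and E=E] T3 by simp
  ultimately show False by simp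
qed


end
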